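(* Let $E$ be an almost finitely generated $R$-module and $f:R\to S$ a ring morphism satisfying going-down (generizing). Then ${}^af^{-1}(\mathrm{Supp}_R(E))=\mathrm{Supp}_S(E\otimes_RS)$.
   Context: Rings are commutative and unital. An $A$-module $E$ is almost finitely generated over $A$ if there is a ring morphism $A\to B$ such that $E$ is a finitely generated $B$-module whose induced $A$-module structure is the original one. ${}^af:\mathrm{Spec}(S)\to\mathrm{Spec}(R)$ is $Q\mapsto f^{-1}(Q)$; $\mathrm{Supp}_A(F)=\{P\in\mathrm{Spec}(A)\mid F_P\neq0\}$. *)

theory Defs
  imports Complex_Main "HOL-Library.Function_Algebras"
begin

definition is_ring_hom :: "('a::comm_ring_1 \<Rightarrow> 'b::comm_ring_1) \<Rightarrow> bool" where
  "is_ring_hom f \<longleftrightarrow> f 1 = 1 \<and> (\<forall>x y. f (x + y) = f x + f y) \<and> (\<forall>x y. f (x * y) = f x * f y)"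

definition is_ideal :: "'a::comm_ring_1 set \<Rightarrow> bool" where
  "is_ideal I \<longleftrightarrow> 0 \<in> I \<and> (\<forall>x\<in>I. \<forall>y\<in>I. x + y \<in> I) \<and> (\<forall>x\<in>I. \<forall>r. r * x \<in> I)"

definition is_prime_ideal :: "'a::comm_ring_1 set \<Rightarrow> bool" where
  "is_prime_ideal P \<longleftrightarrow> is_ideal P \<and> 1 \<notin> P \<and> (\<forall>x y. x * y \<in> P \<longrightarrow> x \<in> P \<or> y \<in> P)"

definition spec_map :: "('a::comm_ring_1 \<Rightarrow> 'b::comm_ring_1) \<Rightarrow> 'b set \<Rightarrow> 'a set" where
  "spec_map f Q = f -` Q"

definition going_down :: "('a::comm_ring_1 \<Rightarrow> 'b::comm_ring_1) \<Rightarrow> bool" where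
  "going_down f \<longleftrightarrow> (\<forall>Q P'. is_prime_ideal Q \<and> is_prime_ideal P' \<and> P' \<subseteq> spec_map f Q \<longrightarrow>
      (\<exists>Q'. is_prime_ideal Q' \<and> Q' \<subseteq> Q \<and> spec_map f Q' = P'))"

section \<open>Localization of a module (given by carrier, subtraction, zero, scalar action) at a prime\<close>

definition loc_rel :: "'r::comm_ring_1 set \<Rightarrow> 'e set \<Rightarrow> ('e \<Rightarrow> 'e \<Rightarrow> 'e) \<Rightarrow> 'e \<Rightarrow> ('r \<Rightarrow> 'e \<Rightarrow> 'e)
    \<Rightarrow> (('e \<times> 'r) \<times> ('e \<times> 'r)) set" where
  "loc_rel P M sb z sc = {((m, s), (m', s')). m \<in> M \<and> m' \<in> M \<and> s \<notin> P \<and> s' \<notin> P \<and>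
      (\<exists>t. t \<notin> P \<and> sc t (sb (sc s' m) (sc s m')) = z)}"

definition localization :: "'r::comm_ring_1 set \<Rightarrow> 'e set \<Rightarrow> ('e \<Rightarrow> 'e \<Rightarrow> 'e) \<Rightarrow> 'e \<Rightarrow> ('r \<Rightarrow> 'e \<Rightarrow> 'e)
    \<Rightarrow> ('e \<times> 'r) set set" where
  "localization P M sb z sc = (M \<times> (- P)) // loc_rel P M sb z sc"

definition loc_zero :: "'r::comm_ring_1 set \<Rightarrow> 'e set \<Rightarrow> ('e \<Rightarrow> 'e \<Rightarrow> 'e) \<Rightarrow> 'e \<Rightarrow> ('r \<Rightarrow> 'e \<Rightarrow> 'e)
    \<Rightarrow> ('e \<times> 'r) set" where
  "loc_zero P M sb z sc = loc_rel P M sb z sc `` {(z, 1)}"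

definition Supp :: "'e set \<Rightarrow> ('e \<Rightarrow> 'e \<Rightarrow> 'e) \<Rightarrow> 'e \<Rightarrow> ('r::comm_ring_1 \<Rightarrow> 'e \<Rightarrow> 'e) \<Rightarrow> 'r set set" where
  "Supp M sb z sc = {P. is_prime_ideal P \<and> localization P M sb z sc \<noteq> {loc_zero P M sb z sc}}"

definition Supp_type :: "('r::comm_ring_1 \<Rightarrow> 'e::ab_group_add \<Rightarrow> 'e) \<Rightarrow> 'r set set" where
  "Supp_type sc = Supp UNIV (-) 0 sc"

text \<open>free abelian group on E \<times> S: finitely supported integer-valued functions\<close>
definition free_ab :: "('e \<times> 's \<Rightarrow> int) set" where
  "free_ab = {z. finite {p. z p \<noteq> 0}}"

definition delta :: "'e \<times> 's \<Rightarrow> ('e \<times> 's \<Rightarrow> int)" where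
  "delta p = (\<lambda>q. if q = p then 1 else 0)"

definition tens_gens :: "('r::comm_ring_1 \<Rightarrow> 's::comm_ring_1) \<Rightarrow> ('r \<Rightarrow> 'e::ab_group_add \<Rightarrow> 'e)
    \<Rightarrow> ('e \<times> 's \<Rightarrow> int) set" where
  "tens_gens f sc =
     {delta (x + x', s) - delta (x, s) - delta (x', s) | x x' s. True} \<union>
     {delta (x, s + s') - delta (x, s) - delta (x, s') | x s s'. True} \<union>
     {delta (sc r x, s) - delta (x, f r * s) | r x s. True}"

inductive_set tens_sub :: "('r::comm_ring_1 \<Rightarrow> 's::comm_ring_1) \<Rightarrow> ('r \<Rightarrow> 'e::ab_group_add \<Rightarrow> 'e)
    \<Rightarrow> ('e \<times> 's \<Rightarrow> int) set" for f sc where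
  gen: "g \<in> tens_gens f sc \<Longrightarrow> g \<in> tens_sub f sc"
| zero: "0 \<in> tens_sub f sc"
| diff: "a \<in> tens_sub f sc \<Longrightarrow> b \<in> tens_sub f sc \<Longrightarrow> a - b \<in> tens_sub f sc"

definition tens_eq :: "('r::comm_ring_1 \<Rightarrow> 's::comm_ring_1) \<Rightarrow> ('r \<Rightarrow> 'e::ab_group_add \<Rightarrow> 'e)
    \<Rightarrow> (('e \<times> 's \<Rightarrow> int) \<times> ('e \<times> 's \<Rightarrow> int)) set" where
  "tens_eq f sc = {(z, z'). z \<in> free_ab \<and> z' \<in> free_ab \<and> z - z' \<in> tens_sub f sc}"

definition tensor :: "('r::comm_ring_1 \<Rightarrow> 's::comm_ring_1) \<Rightarrow> ('r \<Rightarrow> 'e::ab_group_add \<Rightarrow> 'e)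
    \<Rightarrow> ('e \<times> 's \<Rightarrow> int) set set" where
  "tensor f sc = free_ab // tens_eq f sc"

definition tens_zero :: "('r::comm_ring_1 \<Rightarrow> 's::comm_ring_1) \<Rightarrow> ('r \<Rightarrow> 'e::ab_group_add \<Rightarrow> 'e)
    \<Rightarrow> ('e \<times> 's \<Rightarrow> int) set" where
  "tens_zero f sc = tens_eq f sc `` {0}"

definition tens_diff :: "('e \<times> 's \<Rightarrow> int) set \<Rightarrow> ('e \<times> 's \<Rightarrow> int) set \<Rightarrow> ('e \<times> 's \<Rightarrow> int) set" where
  "tens_diff C C' = {z - z' | z z'. z \<in> C \<and> z' \<in> C'}"

text \<open>S-action on free generators: s . (x, t) = (x, s t), extended additively\<close>
definition free_sact :: "'s::comm_ring_1 \<Rightarrow> ('e \<times> 's \<Rightarrow> int) \<Rightarrow> ('e \<times> 's \<Rightarrow> int)" where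
  "free_sact s z = (\<lambda>(x, u). \<Sum>t \<in> {t. z (x, t) \<noteq> 0 \<and> s * t = u}. z (x, t))"

definition tens_scale :: "('r::comm_ring_1 \<Rightarrow> 's::comm_ring_1) \<Rightarrow> ('r \<Rightarrow> 'e::ab_group_add \<Rightarrow> 'e)
    \<Rightarrow> 's \<Rightarrow> ('e \<times> 's \<Rightarrow> int) set \<Rightarrow> ('e \<times> 's \<Rightarrow> int) set" where
  "tens_scale f sc s C = tens_eq f sc `` (free_sact s ` C)"

definition Supp_tensor :: "('r::comm_ring_1 \<Rightarrow> 's::comm_ring_1) \<Rightarrow> ('r \<Rightarrow> 'e::ab_group_add \<Rightarrow> 'e) \<Rightarrow> 's set set" where
  "Supp_tensor f sc = Supp (tensor f sc) tens_diff (tens_zero f sc) (tens_scale f sc)"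

definition afg_witness :: "('a::comm_ring_1 \<Rightarrow> 'e::ab_group_add \<Rightarrow> 'e) \<Rightarrow> ('a \<Rightarrow> 'c::comm_ring_1)
    \<Rightarrow> ('c \<Rightarrow> 'e \<Rightarrow> 'e) \<Rightarrow> bool" where
  "afg_witness sc g scB \<longleftrightarrow> is_ring_hom g \<and> module scB \<and>
     (\<exists>F. finite F \<and> module.span scB F = UNIV) \<and> (\<forall>r x. sc r x = scB (g r) x)"

end

theory Submission
  imports Defs
begin

lemma loc_all_related:
  assumes "z \<in> M" "1 \<notin> P"
    and H: "\<And>m m' s s'. m\<in>M \<Longrightarrow> m'\<in>M \<Longrightarrow> s\<notin>P \<Longrightarrow> s'\<notin>P \<Longrightarrow>
       (\<exists>t. t\<notin>P \<and> sc t (sb (sc s' m) (sc s m')) = z)"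
  shows "localization P M sb z sc = {loc_zero P M sb z sc}"
proof -
  have R: "loc_rel P M sb z sc = (M \<times> (- P)) \<times> (M \<times> (- P))"
    unfolding loc_rel_def using H by auto
  have ne: "(z,1) \<in> M \<times> (- P)" using assms by auto
  have "(M \<times> (- P)) // ((M \<times> (- P)) \<times> (M \<times> (- P))) = {M \<times> (- P)}"
    using ne unfolding quotient_def by auto
  moreover have "loc_zero P M sb z sc = M \<times> (- P)"
    unfolding loc_zero_def R using ne by auto
  ultimately show ?thesis unfolding localization_def R by simp
qed

lemma loc_zero_rel:
  assumes L: "localization P M sb z sc = {loc_zero P M sb z sc}" and "m\<in>M" "1\<notin>P"
    and refl: "\<exists>t. t\<notin>P \<and> sc t (sb (sc 1 m) (sc 1 m)) = z"
  shows "\<exists>t. t\<notin>P \<and> sc t (sb (sc 1 z) (sc 1 m)) = z"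
proof -
  have "loc_rel P M sb z sc `` {(m,1)} \<in> localization P M sb z sc"
    unfolding localization_def using assms by (auto intro: quotientI)
  hence "loc_rel P M sb z sc `` {(m,1)} = loc_rel P M sb z sc `` {(z,1)}"
    using L unfolding loc_zero_def by auto
  moreover have "(m,1) \<in> loc_rel P M sb z sc `` {(m,1)}"
    using assms unfolding loc_rel_def by auto
  ultimately have "((z,1),(m,1)) \<in> loc_rel P M sb z sc" by auto
  thus ?thesis unfolding loc_rel_def by auto
qed


lemma supp_sum_eq:
  assumes "finite A" "{t. h t \<noteq> 0 \<and> C t} \<subseteq> A"
  shows "sum h {t. h t \<noteq> 0 \<and> C t} = sum h {t\<in>A. C t}"
  by (rule sum.mono_neutral_left) (use assms in auto)

lemma free_ab_fin: "z \<in> free_ab \<Longrightarrow> finite {p. z p \<noteq> 0}"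
  by (simp add: free_ab_def)

lemma free_ab_slice: "z \<in> free_ab \<Longrightarrow> finite {t. z (x,t) \<noteq> 0}"
proof -
  assume "z \<in> free_ab"
  hence "finite (Pair x -` {p. z p \<noteq> 0})"
    by (intro finite_vimageI) (auto simp: free_ab_def inj_on_def)
  thus ?thesis by (simp add: vimage_def)
qed

lemma free_ab_0[simp]: "0 \<in> free_ab" by (simp add: free_ab_def)
lemma free_ab_0'[simp]: "(\<lambda>a. 0) \<in> free_ab" by (simp add: free_ab_def)

lemma free_ab_diff[simp]: "a \<in> free_ab \<Longrightarrow> b \<in> free_ab \<Longrightarrow> a - b \<in> free_ab"
  unfolding free_ab_def
  by (rule CollectI, rule finite_subset[of _ "{p. a p \<noteq> 0} \<union> {p. b p \<noteq> 0}"]) auto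

lemma free_ab_add[simp]: "a \<in> free_ab \<Longrightarrow> b \<in> free_ab \<Longrightarrow> a + b \<in> free_ab"
  unfolding free_ab_def
  by (rule CollectI, rule finite_subset[of _ "{p. a p \<noteq> 0} \<union> {p. b p \<noteq> 0}"]) auto

lemma free_ab_uminus[simp]: "a \<in> free_ab \<Longrightarrow> - a \<in> free_ab"
  unfolding free_ab_def by simp

lemma free_ab_delta[simp]: "delta p \<in> free_ab"
  unfolding free_ab_def delta_def
  by (rule CollectI, rule finite_subset[of _ "{p}"]) auto

lemma free_sact_on:
  assumes "finite A" "{t. z (x,t) \<noteq> 0} \<subseteq> A"
  shows "free_sact s z (x,u) = (\<Sum>t\<in>{t\<in>A. s*t = u}. z (x,t))"
proof -
  have "free_sact s z (x,u) = (\<Sum>t \<in> {t. z (x, t) \<noteq> 0 \<and> s * t = u}. z (x, t))"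
    by (simp add: free_sact_def)
  also have "\<dots> = (\<Sum>t\<in>{t\<in>A. s*t = u}. z (x,t))"
    by (rule supp_sum_eq[where h="\<lambda>t. z (x,t)"]) (use assms in auto)
  finally show ?thesis .
qed

lemma free_sact_diff:
  assumes "a \<in> free_ab" "b \<in> free_ab"
  shows "free_sact s (a - b) = free_sact s a - free_sact s b"
proof (rule ext, clarify)
  fix x u
  let ?A = "{t. a (x,t) \<noteq> 0} \<union> {t. b (x,t) \<noteq> 0}"
  have fA: "finite ?A" using assms free_ab_slice by auto
  have "free_sact s (a - b) (x,u) = (\<Sum>t\<in>{t\<in>?A. s*t = u}. (a - b) (x,t))"
    by (rule free_sact_on[OF fA]) auto
  also have "\<dots> = (\<Sum>t\<in>{t\<in>?A. s*t = u}. a (x,t)) - (\<Sum>t\<in>{t\<in>?A. s*t = u}. b (x,t))"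
    by (simp add: sum_subtractf)
  also have "\<dots> = free_sact s a (x,u) - free_sact s b (x,u)"
    using free_sact_on[OF fA, of a x s u] free_sact_on[OF fA, of b x s u] by auto
  finally show "free_sact s (a - b) (x,u) = (free_sact s a - free_sact s b) (x,u)" by simp
qed

lemma free_sact_add:
  assumes "a \<in> free_ab" "b \<in> free_ab"
  shows "free_sact s (a + b) = free_sact s a + free_sact s b"
proof (rule ext, clarify)
  fix x u
  let ?A = "{t. a (x,t) \<noteq> 0} \<union> {t. b (x,t) \<noteq> 0}"
  have fA: "finite ?A" using assms free_ab_slice by auto
  have "free_sact s (a + b) (x,u) = (\<Sum>t\<in>{t\<in>?A. s*t = u}. (a + b) (x,t))"
    by (rule free_sact_on[OF fA]) auto
  also have "\<dots> = (\<Sum>t\<in>{t\<in>?A. s*t = u}. a (x,t)) + (\<Sum>t\<in>{t\<in>?A. s*t = u}. b (x,t))"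
    by (simp add: sum.distrib)
  also have "\<dots> = free_sact s a (x,u) + free_sact s b (x,u)"
    using free_sact_on[OF fA, of a x s u] free_sact_on[OF fA, of b x s u] by auto
  finally show "free_sact s (a + b) (x,u) = (free_sact s a + free_sact s b) (x,u)" by simp
qed

lemma free_sact_0[simp]: "free_sact s 0 = 0"
  by (rule ext) (auto simp: free_sact_def)
lemma free_sact_0'[simp]: "free_sact s (\<lambda>a. 0) = (\<lambda>a. 0)"
  by (rule ext) (auto simp: free_sact_def)

lemma free_sact_delta[simp]: "free_sact s (delta (x,t)) = delta (x, s*t)"
proof (rule ext, clarify)
  fix y u
  have "free_sact s (delta (x,t)) (y,u) = (\<Sum>t'\<in>{t'\<in>{t}. s*t' = u}. delta (x,t) (y,t'))"
    by (rule free_sact_on) (auto simp: delta_def)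
  moreover have "{t'\<in>{t}. s*t' = u} = (if s*t = u then {t} else {})" by auto
  ultimately show "free_sact s (delta (x,t)) (y,u) = delta (x, s*t) (y,u)"
    by (auto simp: delta_def)
qed

lemma free_sact_one[simp]:
  assumes "z \<in> free_ab" shows "free_sact 1 z = z"
proof (rule ext, clarify)
  fix x u
  have "free_sact 1 z (x,u) = (\<Sum>t\<in>{t\<in>{t. z (x,t) \<noteq> 0}. 1*t = u}. z (x,t))"
    by (rule free_sact_on) (use assms free_ab_slice in auto)
  also have "\<dots> = (if z (x,u) \<noteq> 0 then z (x,u) else 0)"
  proof -
    have "{t\<in>{t. z (x,t) \<noteq> 0}. 1*t = u} = (if z (x,u) \<noteq> 0 then {u} else {})" by auto
    thus ?thesis by simp
  qed
  finally show "free_sact 1 z (x,u) = z (x,u)" by simp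
qed

lemma free_sact_ab[simp]: "z \<in> free_ab \<Longrightarrow> free_sact s z \<in> free_ab"
proof -
  assume z: "z \<in> free_ab"
  have "{p. free_sact s z p \<noteq> 0} \<subseteq> (\<lambda>p. (fst p, s * snd p)) ` {p. z p \<noteq> 0}"
  proof
    fix p assume "p \<in> {p. free_sact s z p \<noteq> 0}"
    then obtain x u where p: "p = (x,u)" and "free_sact s z (x,u) \<noteq> 0" by (cases p) auto
    hence "{t. z (x, t) \<noteq> 0 \<and> s * t = u} \<noteq> {}" unfolding free_sact_def
      by (metis (no_types, lifting) case_prod_conv sum.empty)
    then obtain t where "z (x,t) \<noteq> 0" "s*t = u" by auto
    thus "p \<in> (\<lambda>p. (fst p, s * snd p)) ` {p. z p \<noteq> 0}" using p by (auto intro!: image_eqI[of _ _ "(x,t)"])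
  qed
  thus ?thesis using z unfolding free_ab_def by (auto intro: finite_subset)
qed

lemma tens_gens_ab: "g \<in> tens_gens f sc \<Longrightarrow> g \<in> free_ab"
  unfolding tens_gens_def by (auto simp del: minus_apply)

lemma tens_sub_ab: "z \<in> tens_sub f sc \<Longrightarrow> z \<in> free_ab"
  by (induction rule: tens_sub.induct) (auto simp: tens_gens_ab simp del: minus_apply)

lemma tens_sub_uminus: "a \<in> tens_sub f sc \<Longrightarrow> - a \<in> tens_sub f sc"
  using tens_sub.diff[OF tens_sub.zero, of a f sc] by simp

lemma tens_sub_add: "a \<in> tens_sub f sc \<Longrightarrow> b \<in> tens_sub f sc \<Longrightarrow> a + b \<in> tens_sub f sc"
  using tens_sub.diff[of a f sc "- b"] tens_sub_uminus[of b f sc] by simp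

lemma tens_sub_sact:
  shows "z \<in> tens_sub f sc \<Longrightarrow> free_sact s z \<in> tens_sub f sc"
proof (induction rule: tens_sub.induct)
  case (gen g)
  then consider (a) x x' t where "g = delta (x + x', t) - delta (x, t) - delta (x', t)"
    | (b) x t t' where "g = delta (x, t + t') - delta (x, t) - delta (x, t')"
    | (c) r x t where "g = delta (sc r x, t) - delta (x, f r * t)"
    unfolding tens_gens_def by blast
  then show ?case
  proof cases
    case a
    hence "free_sact s g = delta (x + x', s*t) - delta (x, s*t) - delta (x', s*t)"
      by (simp add: free_sact_diff)
    hence "free_sact s g \<in> tens_gens f sc" unfolding tens_gens_def by blast
    thus ?thesis by (rule tens_sub.gen)
  next
    case b
    hence "free_sact s g = delta (x, s*t + s*t') - delta (x, s*t) - delta (x, s*t')"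
      by (simp add: free_sact_diff distrib_left)
    hence "free_sact s g \<in> tens_gens f sc" unfolding tens_gens_def by blast
    thus ?thesis by (rule tens_sub.gen)
  next
    case c
    hence "free_sact s g = delta (sc r x, s*t) - delta (x, f r * (s*t))"
      by (simp add: free_sact_diff mult.left_commute)
    hence "free_sact s g \<in> tens_gens f sc" unfolding tens_gens_def by blast
    thus ?thesis by (rule tens_sub.gen)
  qed
next
  case zero thus ?case using tens_sub.zero by (simp add: zero_fun_def)
next
  case (diff a b)
  have "free_sact s (a - b) \<in> tens_sub f sc"
    using diff tens_sub_ab[OF diff.hyps(1)] tens_sub_ab[OF diff.hyps(2)]
    by (simp add: free_sact_diff tens_sub.diff)
  thus ?case by (simp add: fun_diff_def)
qed


definition cls :: "('r::comm_ring_1 \<Rightarrow> 's::comm_ring_1) \<Rightarrow> ('r \<Rightarrow> 'e::ab_group_add \<Rightarrow> 'e)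
    \<Rightarrow> ('e \<times> 's \<Rightarrow> int) \<Rightarrow> ('e \<times> 's \<Rightarrow> int) set" where
  "cls f sc z = tens_eq f sc `` {z}"

lemma mem_cls: "w \<in> cls f sc z \<longleftrightarrow> z \<in> free_ab \<and> w \<in> free_ab \<and> z - w \<in> tens_sub f sc"
  by (simp add: cls_def tens_eq_def)

lemma tens_sub_diff_rev: "a - b \<in> tens_sub f sc \<Longrightarrow> b - a \<in> tens_sub f sc"
  using tens_sub_uminus[of "a - b" f sc] by simp

lemma cls_eq:
  assumes "a \<in> free_ab" "b \<in> free_ab"
  shows "cls f sc a = cls f sc b \<longleftrightarrow> a - b \<in> tens_sub f sc"
proof
  assume "cls f sc a = cls f sc b"
  moreover have "b \<in> cls f sc b" using assms tens_sub.zero by (simp add: mem_cls)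
  ultimately have "b \<in> cls f sc a" by simp
  thus "a - b \<in> tens_sub f sc" by (simp add: mem_cls)
next
  assume h: "a - b \<in> tens_sub f sc"
  show "cls f sc a = cls f sc b"
  proof (rule set_eqI)
    fix w
    have "a - w = (a - b) + (b - w)" "b - w = (b - a) + (a - w)" by simp_all
    thus "w \<in> cls f sc a \<longleftrightarrow> w \<in> cls f sc b"
      using assms h tens_sub_add tens_sub_diff_rev unfolding mem_cls by metis
  qed
qed

lemma tensor_cls: "tensor f sc = cls f sc ` free_ab"
  unfolding tensor_def quotient_def cls_def by auto

lemma tens_zero_cls: "tens_zero f sc = cls f sc 0"
  unfolding tens_zero_def cls_def by simp

lemma tens_diff_cls:
  assumes "a \<in> free_ab" "b \<in> free_ab"
  shows "tens_diff (cls f sc a) (cls f sc b) = cls f sc (a - b)"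
proof (rule set_eqI)
  fix w
  show "w \<in> tens_diff (cls f sc a) (cls f sc b) \<longleftrightarrow> w \<in> cls f sc (a - b)"
  proof
    assume "w \<in> tens_diff (cls f sc a) (cls f sc b)"
    then obtain z z' where w: "w = z - z'" and z: "z \<in> cls f sc a" and z': "z' \<in> cls f sc b"
      unfolding tens_diff_def by auto
    have e: "(a - b) - w = (a - z) - (b - z')" using w by simp
    have "w \<in> free_ab" using w z z' by (simp add: mem_cls)
    moreover have "(a - b) - w \<in> tens_sub f sc" unfolding e
      using z z' by (metis mem_cls tens_sub.diff)
    ultimately show "w \<in> cls f sc (a - b)" using assms by (simp add: mem_cls)
  next
    assume w: "w \<in> cls f sc (a - b)"
    have e: "a - (w + b) = (a - b) - w" by simp
    hence "w + b \<in> cls f sc a" using w assms unfolding mem_cls e by simp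
    moreover have "b \<in> cls f sc b" using assms tens_sub.zero by (simp add: mem_cls)
    moreover have "w = (w + b) - b" by simp
    ultimately show "w \<in> tens_diff (cls f sc a) (cls f sc b)"
      unfolding tens_diff_def by blast
  qed
qed

lemma tens_scale_cls:
  assumes "z \<in> free_ab"
  shows "tens_scale f sc t (cls f sc z) = cls f sc (free_sact t z)"
proof (rule set_eqI)
  fix w
  show "w \<in> tens_scale f sc t (cls f sc z) \<longleftrightarrow> w \<in> cls f sc (free_sact t z)"
  proof
    assume "w \<in> tens_scale f sc t (cls f sc z)"
    then obtain z' where z': "z' \<in> cls f sc z" and "(free_sact t z', w) \<in> tens_eq f sc"
      unfolding tens_scale_def by auto
    hence w: "w \<in> cls f sc (free_sact t z')" unfolding cls_def by auto
    have e: "free_sact t z - w = free_sact t (z - z') + (free_sact t z' - w)"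
      using z' assms by (simp add: mem_cls free_sact_diff)
    moreover have "free_sact t (z - z') \<in> tens_sub f sc"
      using z' by (simp add: mem_cls tens_sub_sact)
    ultimately have "free_sact t z - w \<in> tens_sub f sc" using w
      by (metis mem_cls tens_sub_add)
    thus "w \<in> cls f sc (free_sact t z)" using w assms
      by (simp add: mem_cls)
  next
    assume "w \<in> cls f sc (free_sact t z)"
    moreover have "z \<in> cls f sc z" using assms tens_sub.zero by (simp add: mem_cls)
    ultimately show "w \<in> tens_scale f sc t (cls f sc z)"
      unfolding tens_scale_def cls_def by auto
  qed
qed


lemma hom_0: "is_ring_hom f \<Longrightarrow> f 0 = 0"
  unfolding is_ring_hom_def by (metis add_cancel_right_right add_0)
lemma hom_add: "is_ring_hom f \<Longrightarrow> f (x + y) = f x + f y"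
  unfolding is_ring_hom_def by blast
lemma hom_mult: "is_ring_hom f \<Longrightarrow> f (x * y) = f x * f y"
  unfolding is_ring_hom_def by blast
lemma hom_1: "is_ring_hom f \<Longrightarrow> f 1 = 1"
  unfolding is_ring_hom_def by blast
lemma hom_uminus: "is_ring_hom f \<Longrightarrow> f (- x) = - f x"
  using hom_add[of f x "-x"] hom_0[of f] by (metis neg_eq_iff_add_eq_0 add.right_inverse)
lemma hom_diff: "is_ring_hom f \<Longrightarrow> f (x - y) = f x - f y"
  using hom_add[of f x "-y"] hom_uminus[of f y] by simp

lemma ideal_0: "is_ideal I \<Longrightarrow> 0 \<in> I" unfolding is_ideal_def by blast
lemma ideal_add: "is_ideal I \<Longrightarrow> x \<in> I \<Longrightarrow> y \<in> I \<Longrightarrow> x + y \<in> I" unfolding is_ideal_def by blast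
lemma ideal_multl: "is_ideal I \<Longrightarrow> x \<in> I \<Longrightarrow> r * x \<in> I" unfolding is_ideal_def by blast
lemma ideal_multr: "is_ideal I \<Longrightarrow> x \<in> I \<Longrightarrow> x * r \<in> I" unfolding is_ideal_def by (metis mult.commute)
lemma ideal_uminus: "is_ideal I \<Longrightarrow> x \<in> I \<Longrightarrow> - x \<in> I"
  using ideal_multl[of I x "-1"] by simp
lemma ideal_diff: "is_ideal I \<Longrightarrow> x \<in> I \<Longrightarrow> y \<in> I \<Longrightarrow> x - y \<in> I"
  using ideal_add[of I x "-y"] ideal_uminus[of I y] by simp

lemma prime_ideal: "is_prime_ideal P \<Longrightarrow> is_ideal P" unfolding is_prime_ideal_def by blast
lemma prime_one: "is_prime_ideal P \<Longrightarrow> 1 \<notin> P" unfolding is_prime_ideal_def by blast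
lemma prime_mult: "is_prime_ideal P \<Longrightarrow> x \<notin> P \<Longrightarrow> y \<notin> P \<Longrightarrow> x * y \<notin> P"
  unfolding is_prime_ideal_def by blast

lemma prime_preimage:
  assumes "is_ring_hom f" "is_prime_ideal Q"
  shows "is_prime_ideal (f -` Q)"
  using assms unfolding is_prime_ideal_def is_ideal_def
  by (auto simp: hom_0 hom_add hom_mult hom_1)

lemma tens_sub_intmult:
  assumes "a \<in> tens_sub f sc" shows "(\<lambda>q. n * a q) \<in> tens_sub f sc"
proof -
  have nat: "(\<lambda>q. int k * a q) \<in> tens_sub f sc" for k
  proof (induction k)
    case 0 thus ?case using tens_sub.zero by (simp add: zero_fun_def)
  next
    case (Suc k)
    have "(\<lambda>q. int (Suc k) * a q) = (\<lambda>q. int k * a q) + a" by (rule ext) (simp add: algebra_simps)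
    thus ?case using Suc assms tens_sub_add by metis
  qed
  show ?thesis
  proof (cases "n \<ge> 0")
    case True thus ?thesis using nat[of "nat n"] by simp
  next
    case False
    have "(\<lambda>q. n * a q) = - (\<lambda>q. int (nat (-n)) * a q)" using False by (rule_tac ext) simp
    thus ?thesis using nat tens_sub_uminus by metis
  qed
qed

definition ndelta :: "int \<Rightarrow> 'e \<times> 's \<Rightarrow> ('e \<times> 's \<Rightarrow> int)" where
  "ndelta n p = (\<lambda>q. if q = p then n else 0)"

lemma free_sact_ndelta: "free_sact c (ndelta n (x,s)) = ndelta n (x, c*s)"
proof (rule ext, clarify)
  fix y u
  have "free_sact c (ndelta n (x,s)) (y,u) = (\<Sum>t'\<in>{t'\<in>{s}. c*t' = u}. ndelta n (x,s) (y,t'))"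
    by (rule free_sact_on) (auto simp: ndelta_def)
  moreover have "{t'\<in>{s}. c*t' = u} = (if c*s = u then {s} else {})" by auto
  ultimately show "free_sact c (ndelta n (x,s)) (y,u) = ndelta n (x, c*s) (y,u)"
    by (auto simp: ndelta_def)
qed

lemma ndelta_ab[simp]: "ndelta n p \<in> free_ab"
  unfolding free_ab_def ndelta_def
  by (rule CollectI, rule finite_subset[of _ "{p}"]) auto

lemma delta_zero_sub: "delta (0, w) \<in> tens_sub f sc"
proof -
  have "delta (0 + 0, w) - delta (0, w) - delta (0, w) \<in> tens_gens f sc"
    unfolding tens_gens_def by blast
  hence "- delta (0, w) \<in> tens_sub f sc" by (simp add: tens_sub.gen)
  thus ?thesis using tens_sub_uminus by fastforce
qed

lemma delta_killed:
  assumes "sc r x = 0"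
  shows "delta (x, f r * w) \<in> tens_sub f sc"
proof -
  have "delta (sc r x, w) - delta (x, f r * w) \<in> tens_gens f sc"
    unfolding tens_gens_def by blast
  hence "delta (x, f r * w) - delta (sc r x, w) \<in> tens_sub f sc"
    using tens_sub.gen tens_sub_diff_rev by blast
  moreover have "delta (x, f r * w) = (delta (x, f r * w) - delta (sc r x, w)) + delta (0, w)"
    using assms by simp
  ultimately show ?thesis using delta_zero_sub tens_sub_add by metis
qed

lemma ndelta_delta: "ndelta n p = (\<lambda>q. n * delta p q)"
  by (rule ext) (simp add: ndelta_def delta_def)

lemma vanish_free:
  assumes fh: "is_ring_hom f" and Qp: "is_prime_ideal Q"
    and van: "\<And>x. \<exists>r. r \<notin> f -` Q \<and> sc r x = 0"
  shows "finite A \<Longrightarrow> z \<in> free_ab \<Longrightarrow> {p. z p \<noteq> 0} \<subseteq> A \<Longrightarrow>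
     \<exists>t. t \<notin> Q \<and> (\<forall>u. free_sact (t*u) z \<in> tens_sub f sc)"
proof (induction A arbitrary: z rule: finite_induct)
  case empty
  hence "z = 0" by (auto simp: fun_eq_iff)
  thus ?case using Qp prime_one tens_sub.zero by (metis free_sact_0)
next
  case (insert p A)
  obtain x s where p: "p = (x,s)" by (cases p)
  define z' where "z' = z - ndelta (z p) p"
  have z'ab: "z' \<in> free_ab" using insert by (simp add: z'_def)
  have "{p. z' p \<noteq> 0} \<subseteq> A" using insert.prems insert.hyps by (auto simp: z'_def ndelta_def)
  then obtain t' where t': "t' \<notin> Q" "\<And>u. free_sact (t'*u) z' \<in> tens_sub f sc"
    using insert.IH z'ab by blast
  obtain r where r: "r \<notin> f -` Q" "sc r x = 0" using van by blast
  define n where "n = z p"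
  have zz: "z = z' + ndelta n p" by (simp add: z'_def n_def)
  show ?case
  proof (intro exI conjI allI)
    show "t' * f r \<notin> Q" using t' r Qp prime_mult by auto
    fix u
    have "free_sact (t' * f r * u) z = free_sact (t' * (f r * u)) z' + ndelta n (x, f r * (t' * u * s))"
      apply (subst zz) unfolding p using z'ab
      by (simp add: free_sact_add free_sact_ndelta mult_ac)
    moreover have "ndelta n (x, f r * (t' * u * s)) \<in> tens_sub f sc"
      unfolding ndelta_delta using delta_killed[where sc=sc and f=f, OF r(2)] tens_sub_intmult by blast
    ultimately show "free_sact (t' * f r * u) z \<in> tens_sub f sc"
      using t'(2) tens_sub_add by metis
  qed
qed

lemma easy_dir:
  assumes fh: "is_ring_hom f" and Qp: "is_prime_ideal Q"
    and van: "\<And>x. \<exists>r. r \<notin> f -` Q \<and> sc r x = 0"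
  shows "localization Q (tensor f sc) tens_diff (tens_zero f sc) (tens_scale f sc)
       = {loc_zero Q (tensor f sc) tens_diff (tens_zero f sc) (tens_scale f sc)}"
proof (rule loc_all_related)
  show "tens_zero f sc \<in> tensor f sc" by (simp add: tens_zero_cls tensor_cls)
  show "1 \<notin> Q" using Qp prime_one by blast
  fix m m' s s'
  assume m: "m \<in> tensor f sc" and m': "m' \<in> tensor f sc" and s: "s \<notin> Q" "s' \<notin> Q"
  obtain a b where a: "a \<in> free_ab" "m = cls f sc a" and b: "b \<in> free_ab" "m' = cls f sc b"
    using m m' by (auto simp: tensor_cls)
  define d where "d = free_sact s' a - free_sact s b"
  have dab: "d \<in> free_ab" using a b by (simp add: d_def)
  have e: "tens_diff (tens_scale f sc s' m) (tens_scale f sc s m') = cls f sc d"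
    using a b by (simp add: tens_scale_cls tens_diff_cls d_def)
  obtain t where t: "t \<notin> Q" "\<And>u. free_sact (t*u) d \<in> tens_sub f sc"
    using vanish_free[where sc=sc, OF fh Qp van _ dab, of "{p. d p \<noteq> 0}"] dab free_ab_fin by blast
  have "tens_scale f sc t (cls f sc d) = cls f sc 0"
    using t(2)[of 1] dab by (simp add: tens_scale_cls cls_eq)
  thus "\<exists>t. t \<notin> Q \<and> tens_scale f sc t (tens_diff (tens_scale f sc s' m) (tens_scale f sc s m')) = tens_zero f sc"
    using t(1) e by (auto simp: tens_zero_cls)
qed


lemma ideal_sum_principal:
  assumes "is_ideal q"
  shows "is_ideal {x. \<exists>i c. i \<in> q \<and> x = i + c*a}"
  unfolding is_ideal_def
proof (intro conjI ballI allI)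
  have "0 \<in> q" using assms ideal_0 by blast
  hence "0 \<in> q \<and> (0::'a) = 0 + 0*a" by simp
  thus "0 \<in> {x. \<exists>i c. i \<in> q \<and> x = i + c*a}" by blast
next
  fix x y assume "x \<in> {x. \<exists>i c. i \<in> q \<and> x = i + c*a}" "y \<in> {x. \<exists>i c. i \<in> q \<and> x = i + c*a}"
  then obtain i c j d where h: "x = i + c*a" "y = j + d*a" "i \<in> q" "j \<in> q" by blast
  have "x + y = (i + j) + (c + d)*a" using h by (simp add: algebra_simps)
  moreover have "i + j \<in> q" using h assms ideal_add by blast
  ultimately show "x + y \<in> {x. \<exists>i c. i \<in> q \<and> x = i + c*a}" by blast
next
  fix x r assume "x \<in> {x. \<exists>i c. i \<in> q \<and> x = i + c*a}"
  then obtain i c where h: "x = i + c*a" "i \<in> q" by blast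
  have "r * x = r*i + (r*c)*a" using h by (simp add: algebra_simps)
  moreover have "r * i \<in> q" using h assms ideal_multl by blast
  ultimately show "r * x \<in> {x. \<exists>i c. i \<in> q \<and> x = i + c*a}" by blast
qed

lemma exists_prime_avoid:
  fixes U :: "'b::comm_ring_1 set"
  assumes I: "is_ideal I" "I \<inter> U = {}" and U: "1 \<in> U" "\<And>a b. a\<in>U \<Longrightarrow> b\<in>U \<Longrightarrow> a*b \<in> U"
  shows "\<exists>q. is_prime_ideal q \<and> I \<subseteq> q \<and> q \<inter> U = {}"
proof -
  define A where "A = {J. is_ideal J \<and> I \<subseteq> J \<and> J \<inter> U = {}}"
  have "A \<noteq> {}" using I unfolding A_def by blast
  moreover have "\<Union>C \<in> A" if C: "C \<noteq> {}" "subset.chain A C" for C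
  proof -
    have ch: "C \<subseteq> A" "\<And>X Y. X\<in>C \<Longrightarrow> Y\<in>C \<Longrightarrow> X \<subseteq> Y \<or> Y \<subseteq> X"
      using C(2) unfolding subset_chain_def by auto
    have idC: "\<And>X. X \<in> C \<Longrightarrow> is_ideal X" using ch(1) unfolding A_def by blast
    have "is_ideal (\<Union>C)" unfolding is_ideal_def
    proof (intro conjI ballI allI)
      obtain X where "X \<in> C" using C(1) by blast
      thus "0 \<in> \<Union>C" using idC ideal_0 by blast
    next
      fix x y assume "x \<in> \<Union>C" "y \<in> \<Union>C"
      then obtain X Y where "X\<in>C" "Y\<in>C" "x\<in>X" "y\<in>Y" by auto
      hence "(x \<in> Y \<and> y \<in> Y \<and> Y \<in> C) \<or> (x \<in> X \<and> y \<in> X \<and> X \<in> C)" using ch(2) by blast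
      thus "x + y \<in> \<Union>C" using idC ideal_add by blast
    next
      fix x r assume "x \<in> \<Union>C"
      then obtain X where "X\<in>C" "x\<in>X" by auto
      thus "r * x \<in> \<Union>C" using idC ideal_multl by blast
    qed
    moreover have "I \<subseteq> \<Union>C" using C(1) ch(1) unfolding A_def by blast
    moreover have "\<Union>C \<inter> U = {}" using ch(1) unfolding A_def by blast
    ultimately show ?thesis unfolding A_def by blast
  qed
  ultimately obtain q where q: "q \<in> A" and qmax: "\<And>X. X \<in> A \<Longrightarrow> q \<subseteq> X \<Longrightarrow> X = q"
    using subset_Zorn_nonempty[of A] by blast
  have qi: "is_ideal q" "I \<subseteq> q" "q \<inter> U = {}" using q unfolding A_def by auto
  have big: "\<exists>u\<in>U. \<exists>i c. i \<in> q \<and> u = i + c*a" if "a \<notin> q" for a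
  proof (rule ccontr)
    assume "\<not> ?thesis"
    moreover have qsub: "q \<subseteq> {x. \<exists>i c. i \<in> q \<and> x = i + c*a}"
    proof
      fix x assume "x \<in> q"
      hence "x \<in> q \<and> x = x + 0*a" by simp
      thus "x \<in> {x. \<exists>i c. i \<in> q \<and> x = i + c*a}" by blast
    qed
    moreover have "I \<subseteq> {x. \<exists>i c. i \<in> q \<and> x = i + c*a}" using qi(2) qsub by blast
    ultimately have inA: "{x. \<exists>i c. i \<in> q \<and> x = i + c*a} \<in> A" using ideal_sum_principal[OF qi(1)] unfolding A_def
      by blast
    have "{x. \<exists>i c. i \<in> q \<and> x = i + c*a} = q" using qmax[OF inA qsub] .
    moreover have "0 \<in> q \<and> a = 0 + 1*a" using qi(1) ideal_0 by simp
    hence "a \<in> {x. \<exists>i c. i \<in> q \<and> x = i + c*a}" by blast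
    ultimately show False using that by blast
  qed
  have "is_prime_ideal q" unfolding is_prime_ideal_def
  proof (intro conjI allI impI)
    show "is_ideal q" by (rule qi(1))
    show "1 \<notin> q" using qi(3) U(1) by blast
    fix a b assume ab: "a * b \<in> q"
    show "a \<in> q \<or> b \<in> q"
    proof (rule ccontr)
      assume "\<not> (a \<in> q \<or> b \<in> q)"
      then obtain u1 i1 c1 u2 i2 c2 where u: "u1 \<in> U" "i1 \<in> q" "u1 = i1 + c1*a" "u2 \<in> U" "i2 \<in> q" "u2 = i2 + c2*b"
        using big by meson
      have "u1 * u2 = i1 * u2 + (c1 * a) * i2 + (c1 * c2) * (a * b)"
        using u by (simp add: algebra_simps)
      moreover have "i1 * u2 \<in> q" "(c1 * a) * i2 \<in> q" "(c1 * c2) * (a * b) \<in> q"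
        using u ab qi(1) ideal_multl ideal_multr by blast+
      ultimately have "u1 * u2 \<in> q" using qi(1) ideal_add by metis
      moreover have "u1 * u2 \<in> U" using U u by blast
      ultimately show False using qi(3) by blast
    qed
  qed
  thus ?thesis using qi by blast
qed


lemma ideal_shift: "is_ideal q \<Longrightarrow> a - b \<in> q \<Longrightarrow> b \<notin> q \<Longrightarrow> a \<notin> q"
  using ideal_diff[of q a "a - b"] by auto

lemma ideal_trans: "is_ideal q \<Longrightarrow> a - b \<in> q \<Longrightarrow> b - c \<in> q \<Longrightarrow> a - c \<in> q"
  using ideal_add[of q "a - b" "b - c"] by simp

definition vanq :: "'b::comm_ring_1 set \<Rightarrow> ('b \<Rightarrow> 'e::zero \<Rightarrow> 'e) \<Rightarrow> 'e set \<Rightarrow> bool" where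
  "vanq q scB V \<longleftrightarrow> (\<forall>e\<in>V. \<exists>c. c \<notin> q \<and> scB c e = 0)"

definition linq :: "'b::comm_ring_1 set \<Rightarrow> ('b \<Rightarrow> 'e::ab_group_add \<Rightarrow> 'e) \<Rightarrow> 'e set \<Rightarrow> ('e \<Rightarrow> 'b) \<Rightarrow> bool" where
  "linq q scB V \<mu> \<longleftrightarrow> (\<forall>a\<in>V. \<forall>a'\<in>V. \<mu> (a + a') - \<mu> a - \<mu> a' \<in> q) \<and>
          (\<forall>b. \<forall>a\<in>V. \<mu> (scB b a) - b * \<mu> a \<in> q)"

definition claimq where
  "claimq q scB V \<longleftrightarrow> vanq q scB V \<or> (\<exists>\<mu>. linq q scB V \<mu> \<and> (\<exists>y\<in>V. \<mu> y \<notin> q))"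

lemma mu_step:
  assumes M: "module scB" and qp: "is_prime_ideal q"
  shows "claimq q scB (module.span scB S) \<Longrightarrow> claimq q scB (module.span scB (insert y S))"
proof -
  interpret M: module scB by (rule M)
  have qi: "is_ideal q" using qp prime_ideal by blast
  let ?S = "M.span S" and ?S' = "M.span (insert y S)"
  have S': "e \<in> ?S' \<longleftrightarrow> (\<exists>k. e - scB k y \<in> ?S)" for e
    using M.span_insert[of y S] by blast
  have SS': "?S \<subseteq> ?S'" by (simp add: M.span_mono subset_insertI)
  assume IH: "claimq q scB ?S"
  show ?thesis
  proof (cases "\<exists>c. c \<notin> q \<and> scB c y \<in> ?S")
    case True
    then obtain c where c: "c \<notin> q" "scB c y \<in> ?S" by blast
    have cS: "scB c e \<in> ?S" if "e \<in> ?S'" for e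
    proof -
      have "\<exists>k. e - scB k y \<in> ?S" using S' that by blast
      then obtain k where k: "e - scB k y \<in> ?S" by blast
      have "scB c e = scB c ((e - scB k y) + scB k y)" by simp
      also have "\<dots> = scB c (e - scB k y) + scB c (scB k y)" by (rule M.scale_right_distrib)
      also have "scB c (scB k y) = scB k (scB c y)" by (rule M.scale_left_commute)
      finally have eq: "scB c e = scB c (e - scB k y) + scB k (scB c y)" .
      have "scB c (e - scB k y) \<in> ?S" using k by (rule M.span_scale)
      moreover have "scB k (scB c y) \<in> ?S" using c(2) by (rule M.span_scale)
      ultimately show ?thesis unfolding eq by (rule M.span_add)
    qed
    from IH[unfolded claimq_def] show ?thesis
    proof
      assume "vanq q scB ?S"
      hence van: "\<forall>e\<in>?S. \<exists>c. c \<notin> q \<and> scB c e = 0" by (simp add: vanq_def)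
      have "\<exists>c'. c' \<notin> q \<and> scB c' e = 0" if eS: "e \<in> ?S'" for e
      proof -
        have "\<exists>c'. c' \<notin> q \<and> scB c' (scB c e) = 0" using van cS[OF eS] by blast
        then obtain c' where "c' \<notin> q" "scB c' (scB c e) = 0" by blast
        moreover have "c' * c \<notin> q" using c qp prime_mult \<open>c' \<notin> q\<close> by blast
        ultimately show ?thesis by (intro exI[of _ "c' * c"]) simp
      qed
      thus ?thesis unfolding claimq_def vanq_def by (intro disjI1) blast
    next
      assume "\<exists>\<mu>. linq q scB ?S \<mu> \<and> (\<exists>y\<in>?S. \<mu> y \<notin> q)"
      then obtain \<mu> y0 where mu1: "\<And>a a'. a\<in>?S \<Longrightarrow> a'\<in>?S \<Longrightarrow> \<mu> (a + a') - \<mu> a - \<mu> a' \<in> q"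
        and mu2: "\<And>b a. a\<in>?S \<Longrightarrow> \<mu> (scB b a) - b * \<mu> a \<in> q" and y0: "y0 \<in> ?S" "\<mu> y0 \<notin> q"
        unfolding linq_def by blast
      define \<mu>' where "\<mu>' e = \<mu> (scB c e)" for e
      have "\<mu>' (a + a') - \<mu>' a - \<mu>' a' \<in> q" if "a\<in>?S'" "a'\<in>?S'" for a a'
        using mu1[OF cS[OF that(1)] cS[OF that(2)]] by (simp add: \<mu>'_def M.scale_right_distrib)
      moreover have "\<mu>' (scB b a) - b * \<mu>' a \<in> q" if "a\<in>?S'" for a b
      proof -
        have "scB c (scB b a) = scB b (scB c a)" by (rule M.scale_left_commute)
        thus ?thesis using mu2[OF cS[OF that], of b] unfolding \<mu>'_def by simp
      qed
      moreover have "\<mu>' y0 \<notin> q"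
      proof -
        have "c * \<mu> y0 \<notin> q" using c y0 qp prime_mult by blast
        thus ?thesis unfolding \<mu>'_def by (rule ideal_shift[OF qi mu2[OF y0(1), of c]])
      qed
      ultimately have "linq q scB ?S' \<mu>'" "y0 \<in> ?S'" "\<mu>' y0 \<notin> q" using y0 SS' unfolding linq_def by blast+
      thus ?thesis unfolding claimq_def by (intro disjI2 exI[of _ \<mu>']) blast
    qed
  next
    case False
    define \<mu>' where "\<mu>' e = (SOME k. e - scB k y \<in> ?S)" for e
    have mu': "e - scB (\<mu>' e) y \<in> ?S" if "e \<in> ?S'" for e
    proof -
      have "\<exists>k. e - scB k y \<in> ?S" using S' that by blast
      thus ?thesis unfolding \<mu>'_def by (rule someI_ex)
    qed
    have uniq: "k1 - k2 \<in> q" if "e - scB k1 y \<in> ?S" "e - scB k2 y \<in> ?S" for e k1 k2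
    proof (rule ccontr)
      assume "k1 - k2 \<notin> q"
      moreover have "scB (k1 - k2) y = (e - scB k2 y) - (e - scB k1 y)"
        by (simp add: M.scale_left_diff_distrib)
      hence "scB (k1 - k2) y \<in> ?S" using M.span_diff[OF that(2) that(1)] by simp
      ultimately show False using False by blast
    qed
    have "\<mu>' (a + a') - \<mu>' a - \<mu>' a' \<in> q" if "a\<in>?S'" "a'\<in>?S'" for a a'
    proof -
      have "a + a' \<in> ?S'" using that M.span_add by blast
      hence 1: "(a + a') - scB (\<mu>' (a + a')) y \<in> ?S" by (rule mu')
      have "(a - scB (\<mu>' a) y) + (a' - scB (\<mu>' a') y) \<in> ?S" by (rule M.span_add[OF mu'[OF that(1)] mu'[OF that(2)]])
      moreover have "(a - scB (\<mu>' a) y) + (a' - scB (\<mu>' a') y) = (a + a') - scB (\<mu>' a + \<mu>' a') y"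
        by (simp add: M.scale_left_distrib)
      ultimately have "\<mu>' (a + a') - (\<mu>' a + \<mu>' a') \<in> q" using uniq[OF 1] by simp
      thus ?thesis by (simp add: algebra_simps)
    qed
    moreover have "\<mu>' (scB b a) - b * \<mu>' a \<in> q" if "a\<in>?S'" for a b
    proof -
      have "scB b a \<in> ?S'" using that M.span_scale by blast
      hence 1: "scB b a - scB (\<mu>' (scB b a)) y \<in> ?S" by (rule mu')
      have "scB b (a - scB (\<mu>' a) y) \<in> ?S" by (rule M.span_scale[OF mu'[OF that]])
      moreover have "scB b (a - scB (\<mu>' a) y) = scB b a - scB (b * \<mu>' a) y"
        by (simp add: M.scale_right_diff_distrib)
      ultimately show ?thesis using uniq[OF 1] by simp
    qed
    moreover have "y \<in> ?S'" by (simp add: M.span_base)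
    moreover have "\<mu>' y \<notin> q"
    proof -
      have "y - scB 1 y \<in> ?S" by (simp add: M.span_zero)
      hence "\<mu>' y - 1 \<in> q" by (rule uniq[OF mu'[OF \<open>y \<in> ?S'\<close>]])
      thus ?thesis using ideal_shift[OF qi, of "\<mu>' y" 1] qp prime_one by blast
    qed
    ultimately have "linq q scB ?S' \<mu>'" "y \<in> ?S'" "\<mu>' y \<notin> q" unfolding linq_def by blast+
    thus ?thesis unfolding claimq_def by (intro disjI2 exI[of _ \<mu>']) blast
  qed
qed

lemma mu_exists:
  assumes M: "module scB" and qp: "is_prime_ideal q" and F: "finite F" "module.span scB F = UNIV"
    and x: "\<And>b. b \<notin> q \<Longrightarrow> scB b x \<noteq> 0"
  shows "\<exists>\<mu>. (\<forall>a a'. \<mu> (a + a') - \<mu> a - \<mu> a' \<in> q) \<and> (\<forall>b a. \<mu> (scB b a) - b * \<mu> a \<in> q)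
             \<and> (\<exists>y. \<mu> y \<notin> q)"
proof -
  interpret M: module scB by (rule M)
  have "claimq q scB (module.span scB F)"
    using F(1)
  proof (induction F rule: finite_induct)
    case empty
    have "1 \<notin> q" using qp prime_one by blast
    thus ?case unfolding claimq_def vanq_def by (intro disjI1) auto
  next
    case (insert y S)
    thus ?case using mu_step[OF M qp] by blast
  qed
  moreover have "\<not> vanq q scB (module.span scB F)"
    using x F(2) unfolding vanq_def by auto
  ultimately obtain \<mu> y where "linq q scB UNIV \<mu>" "\<mu> y \<notin> q" using F(2) unfolding claimq_def by auto
  thus ?thesis unfolding linq_def by blast
qed


definition mc :: "'a::comm_ring_1 set \<Rightarrow> 'a \<Rightarrow> 'a \<Rightarrow> bool" where
  "mc I a b \<longleftrightarrow> a - b \<in> I"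

lemma mc_refl: "is_ideal I \<Longrightarrow> mc I a a"
  unfolding mc_def using ideal_0 by simp
lemma mc_sym: "is_ideal I \<Longrightarrow> mc I a b \<Longrightarrow> mc I b a"
  unfolding mc_def using ideal_uminus by fastforce
lemma mc_trans: "is_ideal I \<Longrightarrow> mc I a b \<Longrightarrow> mc I b c \<Longrightarrow> mc I a c"
  unfolding mc_def using ideal_trans by blast
lemma mc_add: "is_ideal I \<Longrightarrow> mc I a b \<Longrightarrow> mc I c d \<Longrightarrow> mc I (a + c) (b + d)"
  unfolding mc_def using ideal_add[of I "a - b" "c - d"] by (simp add: algebra_simps)
lemma mc_mult: "is_ideal I \<Longrightarrow> mc I a b \<Longrightarrow> mc I (c * a) (c * b)"
  unfolding mc_def using ideal_multl[of I "a - b" c] by (simp add: algebra_simps)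
lemma mc_mem: "is_ideal I \<Longrightarrow> mc I a b \<Longrightarrow> b \<in> I \<Longrightarrow> a \<in> I"
  unfolding mc_def using ideal_add[of I "a - b" b] by simp
lemma mc_notmem: "is_ideal I \<Longrightarrow> mc I a b \<Longrightarrow> b \<notin> I \<Longrightarrow> a \<notin> I"
  unfolding mc_def using ideal_shift by blast
lemma mc_eq: "is_ideal I \<Longrightarrow> a = b \<Longrightarrow> mc I a b"
  using mc_refl by blast
lemma mc_zero: "is_ideal I \<Longrightarrow> a \<in> I \<Longrightarrow> mc I a 0"
  unfolding mc_def by simp
lemma mc_zero': "mc I a 0 \<Longrightarrow> a \<in> I"
  unfolding mc_def by simp

definition Vb :: "('r::comm_ring_1 \<Rightarrow> 'b::comm_ring_1) \<Rightarrow> 'b set \<Rightarrow> 'b \<Rightarrow> 'b set" where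
  "Vb g q w0 = {x. \<exists>r v. v \<in> q \<and> x = g r * w0 + v}"

fun Vl :: "('r::comm_ring_1 \<Rightarrow> 'b::comm_ring_1) \<Rightarrow> 'b set \<Rightarrow> 'b \<Rightarrow> 'b list \<Rightarrow> 'b set" where
  "Vl g q w0 [] = Vb g q w0"
| "Vl g q w0 (y # ys) = {x. \<exists>a r. a \<in> Vl g q w0 ys \<and> x = a + g r * y}"

lemma Vl_props:
  assumes gh: "is_ring_hom g" and qi: "is_ideal q"
  shows "q \<subseteq> Vl g q w0 ys \<and> w0 \<in> Vl g q w0 ys \<and>
    (\<forall>a\<in>Vl g q w0 ys. \<forall>b\<in>Vl g q w0 ys. a + b \<in> Vl g q w0 ys) \<and>
    (\<forall>a\<in>Vl g q w0 ys. \<forall>r. g r * a \<in> Vl g q w0 ys) \<and> set ys \<subseteq> Vl g q w0 ys"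
proof (induction ys)
  case Nil
  have "q \<subseteq> Vb g q w0"
  proof
    fix v assume "v \<in> q"
    moreover have "v = g 0 * w0 + v" using hom_0[OF gh] by simp
    ultimately show "v \<in> Vb g q w0" unfolding Vb_def by blast
  qed
  moreover have "w0 \<in> Vb g q w0"
  proof -
    have "w0 = g 1 * w0 + 0" using hom_1[OF gh] by simp
    thus ?thesis unfolding Vb_def using ideal_0[OF qi] by blast
  qed
  moreover have "a + b \<in> Vb g q w0" if hyp: "a \<in> Vb g q w0" "b \<in> Vb g q w0" for a b
  proof -
    obtain r v r' v' where h: "v \<in> q" "a = g r * w0 + v" "v' \<in> q" "b = g r' * w0 + v'"
      using hyp unfolding Vb_def by blast
    have "a + b = g (r + r') * w0 + (v + v')" using h hom_add[OF gh] by (simp add: algebra_simps)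
    moreover have "v + v' \<in> q" using h ideal_add[OF qi] by blast
    ultimately show ?thesis unfolding Vb_def by blast
  qed
  moreover have "g s * a \<in> Vb g q w0" if hyp: "a \<in> Vb g q w0" for a s
  proof -
    obtain r v where h: "v \<in> q" "a = g r * w0 + v"
      using hyp unfolding Vb_def by blast
    have "g s * a = g (s * r) * w0 + g s * v" using h hom_mult[OF gh] by (simp add: algebra_simps)
    moreover have "g s * v \<in> q" using h ideal_multl[OF qi] by blast
    ultimately show ?thesis unfolding Vb_def by blast
  qed
  ultimately show ?case by simp
next
  case (Cons y ys)
  let ?V = "Vl g q w0 ys" and ?V' = "Vl g q w0 (y # ys)"
  have IH: "q \<subseteq> ?V" "w0 \<in> ?V" "\<And>a b. a\<in>?V \<Longrightarrow> b\<in>?V \<Longrightarrow> a + b \<in> ?V"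
    "\<And>a r. a\<in>?V \<Longrightarrow> g r * a \<in> ?V" "set ys \<subseteq> ?V" using Cons.IH by blast+
  have sub: "?V \<subseteq> ?V'"
  proof
    fix a assume "a \<in> ?V"
    moreover have "a = a + g 0 * y" using hom_0[OF gh] by simp
    ultimately show "a \<in> ?V'" by (simp only: Vl.simps mem_Collect_eq) blast
  qed
  have "y \<in> ?V'"
  proof -
    have "y = 0 + g 1 * y" using hom_1[OF gh] by simp
    moreover have "0 \<in> ?V" using IH(1) ideal_0[OF qi] by blast
    ultimately show ?thesis by (simp only: Vl.simps mem_Collect_eq) blast
  qed
  moreover have "a + b \<in> ?V'" if hyp: "a \<in> ?V'" "b \<in> ?V'" for a b
  proof -
    obtain a1 r b1 r' where h: "a1 \<in> ?V" "a = a1 + g r * y" "b1 \<in> ?V" "b = b1 + g r' * y"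
      using hyp by auto
    have "a + b = (a1 + b1) + g (r + r') * y" using h hom_add[OF gh] by (simp add: algebra_simps)
    moreover have "a1 + b1 \<in> ?V" using h IH(3) by blast
    ultimately show ?thesis by (simp only: Vl.simps mem_Collect_eq) blast
  qed
  moreover have "g s * a \<in> ?V'" if hyp: "a \<in> ?V'" for a s
  proof -
    obtain a1 r where h: "a1 \<in> ?V" "a = a1 + g r * y"
      using hyp by auto
    have "g s * a = g s * a1 + g (s * r) * y" using h hom_mult[OF gh] by (simp add: algebra_simps)
    moreover have "g s * a1 \<in> ?V" using h IH(4) by blast
    ultimately show ?thesis by (simp only: Vl.simps mem_Collect_eq) blast
  qed
  ultimately show ?case using sub IH by auto
qed

definition good_ell where
  "good_ell f g q Q' w0 V L \<longleftrightarrow> (\<forall>a\<in>V. \<forall>b\<in>V. mc Q' (L (a + b)) (L a + L b)) \<and>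
     (\<forall>a\<in>V. \<forall>r. mc Q' (L (g r * a)) (f r * L a)) \<and> (\<forall>v\<in>q. L v \<in> Q') \<and> L w0 \<notin> Q'"

lemma good_ell_cong:
  assumes gh: "is_ring_hom g" and qi: "is_ideal q" and Qi: "is_ideal Q'"
    and G: "good_ell f g q Q' w0 (Vl g q w0 ys) L"
    and ab: "a \<in> Vl g q w0 ys" "b \<in> Vl g q w0 ys" "a - b \<in> q"
  shows "mc Q' (L a) (L b)"
proof -
  have qV: "q \<subseteq> Vl g q w0 ys" using Vl_props[OF gh qi] by blast
  have "mc Q' (L (b + (a - b))) (L b + L (a - b))" using G ab qV unfolding good_ell_def by blast
  moreover have "mc Q' (L b + L (a - b)) (L b + 0)"
    using mc_add[OF Qi mc_refl[OF Qi] mc_zero[OF Qi]] G ab(3) unfolding good_ell_def by blast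
  ultimately show ?thesis using mc_trans[OF Qi] by simp
qed

lemma ell_base:
  assumes gh: "is_ring_hom g" and fh: "is_ring_hom f" and qp: "is_prime_ideal q" and Qp: "is_prime_ideal Q'"
    and PP: "f -` Q' = g -` q" and w0: "w0 \<notin> q"
  shows "\<exists>L. good_ell f g q Q' w0 (Vb g q w0) L"
proof -
  have qi: "is_ideal q" and Qi: "is_ideal Q'" using qp Qp prime_ideal by blast+
  have wd: "mc Q' (f r1) (f r2)" if h: "v1 \<in> q" "v2 \<in> q" "g r1 * w0 + v1 = g r2 * w0 + v2" for r1 r2 v1 v2
  proof -
    have e1: "g (r1 - r2) * w0 = g r1 * w0 - g r2 * w0" using hom_diff[OF gh] by (simp add: left_diff_distrib)
    have "g r1 * w0 = g r2 * w0 + v2 - v1" using h(3) by (simp add: eq_diff_eq)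
    hence e2: "g r1 * w0 - g r2 * w0 = v2 - v1" by simp
    have "g (r1 - r2) * w0 = v2 - v1" using e1 e2 by simp
    hence "g (r1 - r2) * w0 \<in> q" using h ideal_diff[OF qi] by simp
    hence "g (r1 - r2) \<in> q" using w0 prime_mult[OF qp] by blast
    hence "r1 - r2 \<in> f -` Q'" using PP by simp
    thus ?thesis unfolding mc_def using hom_diff[OF fh] by simp
  qed
  define L where "L x = f (SOME r. \<exists>v. v \<in> q \<and> x = g r * w0 + v)" for x
  have spec: "mc Q' (L x) (f r)" if h: "v \<in> q" "x = g r * w0 + v" for x r v
  proof -
    have "\<exists>r v. v \<in> q \<and> x = g r * w0 + v" using h by blast
    hence "\<exists>v. v \<in> q \<and> x = g (SOME r. \<exists>v. v \<in> q \<and> x = g r * w0 + v) * w0 + v" by (rule someI_ex)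
    then obtain v' where "v' \<in> q" "x = g (SOME r. \<exists>v. v \<in> q \<and> x = g r * w0 + v) * w0 + v'" by blast
    thus ?thesis unfolding L_def using wd h by metis
  qed
  have "good_ell f g q Q' w0 (Vb g q w0) L" unfolding good_ell_def
  proof (intro conjI ballI allI)
    fix a b assume "a \<in> Vb g q w0" "b \<in> Vb g q w0"
    then obtain r v r' v' where h: "v \<in> q" "a = g r * w0 + v" "v' \<in> q" "b = g r' * w0 + v'"
      unfolding Vb_def by blast
    have "a + b = g (r + r') * w0 + (v + v')" using h hom_add[OF gh] by (simp add: algebra_simps)
    moreover have "v + v' \<in> q" using h ideal_add[OF qi] by blast
    ultimately have "mc Q' (L (a + b)) (f (r + r'))" using spec by blast
    moreover have "mc Q' (f r + f r') (L a + L b)"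
      using mc_add[OF Qi mc_sym[OF Qi spec[OF h(1,2)]] mc_sym[OF Qi spec[OF h(3,4)]]] .
    ultimately show "mc Q' (L (a + b)) (L a + L b)"
      using mc_trans[OF Qi] hom_add[OF fh] by metis
  next
    fix a s assume "a \<in> Vb g q w0"
    then obtain r v where h: "v \<in> q" "a = g r * w0 + v" unfolding Vb_def by blast
    have "g s * a = g (s * r) * w0 + g s * v" using h hom_mult[OF gh] by (simp add: algebra_simps)
    moreover have "g s * v \<in> q" using h ideal_multl[OF qi] by blast
    ultimately have "mc Q' (L (g s * a)) (f (s * r))" using spec by blast
    moreover have "mc Q' (f s * f r) (f s * L a)"
      using mc_mult[OF Qi mc_sym[OF Qi spec[OF h]]] .
    ultimately show "mc Q' (L (g s * a)) (f s * L a)"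
      using mc_trans[OF Qi] hom_mult[OF fh] by metis
  next
    fix v assume v: "v \<in> q"
    have "v = g 0 * w0 + v" using hom_0[OF gh] by simp
    hence "mc Q' (L v) (f 0)" using spec v by blast
    thus "L v \<in> Q'" using hom_0[OF fh] mc_zero' by metis
  next
    have "w0 = g 1 * w0 + 0" using hom_1[OF gh] by simp
    hence "mc Q' (L w0) (f 1)" using spec ideal_0[OF qi] by blast
    thus "L w0 \<notin> Q'" using hom_1[OF fh] mc_notmem[OF Qi] prime_one[OF Qp] by metis
  qed
  thus ?thesis by blast
qed


lemma ell_step:
  assumes gh: "is_ring_hom g" and fh: "is_ring_hom f" and qp: "is_prime_ideal q" and Qp: "is_prime_ideal Q'"
    and PP: "f -` Q' = g -` q"
    and G: "good_ell f g q Q' w0 (Vl g q w0 ys) L"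
  shows "\<exists>L'. good_ell f g q Q' w0 (Vl g q w0 (y # ys)) L'"
proof -
  have qi: "is_ideal q" and Qi: "is_ideal Q'" using qp Qp prime_ideal by blast+
  let ?V = "Vl g q w0 ys" and ?V' = "Vl g q w0 (y # ys)"
  have P: "q \<subseteq> ?V" "w0 \<in> ?V" "\<And>a b. a\<in>?V \<Longrightarrow> b\<in>?V \<Longrightarrow> a + b \<in> ?V"
    "\<And>a r. a\<in>?V \<Longrightarrow> g r * a \<in> ?V" using Vl_props[OF gh qi, of w0 ys] by blast+
  have Vdiff: "a - b \<in> ?V" if h: "a \<in> ?V" "b \<in> ?V" for a b
  proof -
    have e: "a - b = a + g (-1) * b" using hom_uminus[OF gh] hom_1[OF gh] by simp
    show ?thesis unfolding e by (rule P(3)[OF h(1) P(4)[OF h(2)]])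
  qed
  have memV': "x \<in> ?V' \<longleftrightarrow> (\<exists>a r. a \<in> ?V \<and> x = a + g r * y)" for x by simp
  have Ladd: "\<And>a b. a\<in>?V \<Longrightarrow> b\<in>?V \<Longrightarrow> mc Q' (L (a + b)) (L a + L b)"
    and Lsc: "\<And>a r. a\<in>?V \<Longrightarrow> mc Q' (L (g r * a)) (f r * L a)"
    and Lq: "\<And>v. v \<in> q \<Longrightarrow> L v \<in> Q'" and Lw: "L w0 \<notin> Q'"
    using G unfolding good_ell_def by blast+
  show ?thesis
  proof (cases "\<exists>c. f c \<notin> Q' \<and> g c * y \<in> ?V")
    case True
    then obtain c where c: "f c \<notin> Q'" "g c * y \<in> ?V" by blast
    have cV: "g c * x \<in> ?V" if hx: "x \<in> ?V'" for x
    proof -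
      have "\<exists>a r. a \<in> ?V \<and> x = a + g r * y" using hx memV' by blast
      then obtain a r where h: "a \<in> ?V" "x = a + g r * y" by blast
      have "g c * x = g c * a + g r * (g c * y)" using h(2) by (simp add: algebra_simps)
      thus ?thesis using P(3)[OF P(4)[OF h(1)] P(4)[OF c(2)]] by simp
    qed
    define L' where "L' x = L (g c * x)" for x
    have "good_ell f g q Q' w0 ?V' L'" unfolding good_ell_def
    proof (intro conjI ballI allI)
      fix a b assume ab: "a \<in> ?V'" "b \<in> ?V'"
      have "g c * (a + b) = g c * a + g c * b" by (simp add: distrib_left)
      show "mc Q' (L' (a + b)) (L' a + L' b)" unfolding L'_def \<open>g c * (a + b) = g c * a + g c * b\<close>
        by (rule Ladd[OF cV[OF ab(1)] cV[OF ab(2)]])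
    next
      fix a s assume a: "a \<in> ?V'"
      have "g c * (g s * a) = g s * (g c * a)" by (simp add: mult.left_commute)
      show "mc Q' (L' (g s * a)) (f s * L' a)" unfolding L'_def \<open>g c * (g s * a) = g s * (g c * a)\<close>
        by (rule Lsc[OF cV[OF a]])
    next
      fix v assume "v \<in> q"
      hence "g c * v \<in> q" using ideal_multl[OF qi] by blast
      thus "L' v \<in> Q'" unfolding L'_def by (rule Lq)
    next
      have "f c * L w0 \<notin> Q'" using c(1) Lw prime_mult[OF Qp] by blast
      thus "L' w0 \<notin> Q'" unfolding L'_def using mc_notmem[OF Qi Lsc[OF P(2), of c]] by blast
    qed
    thus ?thesis by blast
  next
    case False
    have key: "mc Q' (L a1) (L a2)" if h: "a1 \<in> ?V" "a2 \<in> ?V" "a1 + g r1 * y = a2 + g r2 * y" for a1 a2 r1 r2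
    proof -
      have e1: "g (r2 - r1) * y = g r2 * y - g r1 * y" using hom_diff[OF gh] by (simp add: left_diff_distrib)
      have "a1 = a2 + g r2 * y - g r1 * y" using h(3) by (simp add: eq_diff_eq)
      hence e2: "a1 - a2 = g r2 * y - g r1 * y" by simp
      have d: "g (r2 - r1) * y = a1 - a2" using e1 e2 by simp
      hence "g (r2 - r1) * y \<in> ?V" using Vdiff[OF h(1,2)] by simp
      hence "f (r2 - r1) \<in> Q'" using False by blast
      hence "g (r2 - r1) \<in> q" using PP by (metis vimageE vimageI2)
      hence "a1 - a2 \<in> q" using d ideal_multr[OF qi] by metis
      thus ?thesis by (rule good_ell_cong[OF gh qi Qi G h(1,2)])
    qed
    define L' where "L' x = L (SOME a. a \<in> ?V \<and> (\<exists>r. x = a + g r * y))" for x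
    have spec: "mc Q' (L' x) (L a)" if h: "a \<in> ?V" "x = a + g r * y" for x a r
    proof -
      have "\<exists>a. a \<in> ?V \<and> (\<exists>r. x = a + g r * y)" using h by blast
      hence "(SOME a. a \<in> ?V \<and> (\<exists>r. x = a + g r * y)) \<in> ?V \<and>
          (\<exists>r. x = (SOME a. a \<in> ?V \<and> (\<exists>r. x = a + g r * y)) + g r * y)" by (rule someI_ex)
      then obtain r' where h2: "(SOME a. a \<in> ?V \<and> (\<exists>r. x = a + g r * y)) \<in> ?V"
        "x = (SOME a. a \<in> ?V \<and> (\<exists>r. x = a + g r * y)) + g r' * y" by blast
      show ?thesis unfolding L'_def by (rule key[OF h2(1) h(1), of r' r]) (use h2(2) h(2) in simp)
    qed
    have "good_ell f g q Q' w0 ?V' L'" unfolding good_ell_def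
    proof (intro conjI ballI allI)
      fix x x' assume xx: "x \<in> ?V'" "x' \<in> ?V'"
      have "\<exists>a r. a \<in> ?V \<and> x = a + g r * y" using xx(1) memV' by blast
      then obtain a r where h: "a \<in> ?V" "x = a + g r * y" by blast
      have "\<exists>a r. a \<in> ?V \<and> x' = a + g r * y" using xx(2) memV' by blast
      then obtain a' r' where h': "a' \<in> ?V" "x' = a' + g r' * y" by blast
      have "x + x' = (a + a') + g (r + r') * y" using h h' hom_add[OF gh] by (simp add: algebra_simps)
      hence "mc Q' (L' (x + x')) (L (a + a'))" using spec P(3)[OF h(1) h'(1)] by blast
      moreover have "mc Q' (L (a + a')) (L a + L a')" by (rule Ladd[OF h(1) h'(1)])
      moreover have "mc Q' (L a + L a') (L' x + L' x')"
        using mc_add[OF Qi mc_sym[OF Qi spec[OF h]] mc_sym[OF Qi spec[OF h']]] .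
      ultimately show "mc Q' (L' (x + x')) (L' x + L' x')" using mc_trans[OF Qi] by blast
    next
      fix x s assume xx: "x \<in> ?V'"
      have "\<exists>a r. a \<in> ?V \<and> x = a + g r * y" using xx memV' by blast
      then obtain a r where h: "a \<in> ?V" "x = a + g r * y" by blast
      have "g s * x = g s * a + g (s * r) * y" using h hom_mult[OF gh] by (simp add: algebra_simps)
      hence "mc Q' (L' (g s * x)) (L (g s * a))" using spec P(4)[OF h(1)] by blast
      moreover have "mc Q' (L (g s * a)) (f s * L a)" by (rule Lsc[OF h(1)])
      moreover have "mc Q' (f s * L a) (f s * L' x)"
        using mc_mult[OF Qi mc_sym[OF Qi spec[OF h]]] .
      ultimately show "mc Q' (L' (g s * x)) (f s * L' x)" using mc_trans[OF Qi] by blast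
    next
      fix v assume v: "v \<in> q"
      have "v = v + g 0 * y" using hom_0[OF gh] by simp
      hence "mc Q' (L' v) (L v)" using spec P(1) v by blast
      thus "L' v \<in> Q'" using mc_mem[OF Qi] Lq[OF v] by blast
    next
      have "w0 = w0 + g 0 * y" using hom_0[OF gh] by simp
      hence "mc Q' (L' w0) (L w0)" using spec P(2) by blast
      thus "L' w0 \<notin> Q'" using mc_notmem[OF Qi] Lw by blast
    qed
    thus ?thesis by blast
  qed
qed

lemma ell_exists:
  assumes gh: "is_ring_hom g" and fh: "is_ring_hom f" and qp: "is_prime_ideal q" and Qp: "is_prime_ideal Q'"
    and PP: "f -` Q' = g -` q" and w0: "w0 \<notin> q"
  shows "\<exists>L. good_ell f g q Q' w0 (Vl g q w0 ys) L"
proof (induction ys)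
  case Nil thus ?case using ell_base[OF assms] by simp
next
  case (Cons y ys)
  thus ?case using ell_step[OF gh fh qp Qp PP] by blast
qed


definition Phi :: "('e \<Rightarrow> 's::comm_ring_1) \<Rightarrow> ('e \<times> 's \<Rightarrow> int) \<Rightarrow> 's" where
  "Phi lam z = (\<Sum>p\<in>{p. z p \<noteq> 0}. of_int (z p) * lam (fst p) * snd p)"

lemma Phi_on:
  assumes "finite A" "{p. z p \<noteq> 0} \<subseteq> A"
  shows "Phi lam z = (\<Sum>p\<in>A. of_int (z p) * lam (fst p) * snd p)"
  unfolding Phi_def by (rule sum.mono_neutral_left) (use assms in auto)

lemma Phi_diff:
  assumes "a \<in> free_ab" "b \<in> free_ab"
  shows "Phi lam (a - b) = Phi lam a - Phi lam b"
proof -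
  let ?A = "{p. a p \<noteq> 0} \<union> {p. b p \<noteq> 0}"
  have fA: "finite ?A" using assms free_ab_fin by blast
  have "Phi lam (a - b) = (\<Sum>p\<in>?A. of_int ((a - b) p) * lam (fst p) * snd p)"
    by (rule Phi_on[OF fA]) auto
  also have "\<dots> = (\<Sum>p\<in>?A. of_int (a p) * lam (fst p) * snd p) - (\<Sum>p\<in>?A. of_int (b p) * lam (fst p) * snd p)"
    by (simp add: sum_subtractf algebra_simps)
  also have "\<dots> = Phi lam a - Phi lam b"
    using Phi_on[OF fA, of a lam] Phi_on[OF fA, of b lam] by auto
  finally show ?thesis .
qed

lemma Phi_delta: "Phi lam (delta (x, s)) = lam x * s"
proof -
  have "Phi lam (delta (x, s)) = (\<Sum>p\<in>{(x,s)}. of_int (delta (x,s) p) * lam (fst p) * snd p)"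
    by (rule Phi_on) (auto simp: delta_def)
  thus ?thesis by (simp add: delta_def)
qed

lemma Phi_zero: "Phi lam (\<lambda>a. 0) = 0"
  unfolding Phi_def by simp

definition goodX where
  "goodX Q' f sc X lam \<longleftrightarrow>
    (\<forall>x x'. x \<in> X \<longrightarrow> x' \<in> X \<longrightarrow> x + x' \<in> X \<longrightarrow> mc Q' (lam (x + x')) (lam x + lam x')) \<and>
    (\<forall>r x. x \<in> X \<longrightarrow> sc r x \<in> X \<longrightarrow> mc Q' (lam (sc r x)) (f r * lam x))"

lemma goodX_mono: "goodX Q' f sc Y lam \<Longrightarrow> X \<subseteq> Y \<Longrightarrow> goodX Q' f sc X lam"
  unfolding goodX_def by blast

lemma Phi_sub:
  assumes Qi: "is_ideal Q'"
  shows "z \<in> tens_sub f sc \<Longrightarrow> \<exists>X. finite X \<and> (\<forall>lam. goodX Q' f sc X lam \<longrightarrow> Phi lam z \<in> Q')"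
proof (induction rule: tens_sub.induct)
  case (gen g)
  then consider (a) x x' t where "g = delta (x + x', t) - delta (x, t) - delta (x', t)"
    | (b) x t t' where "g = delta (x, t + t') - delta (x, t) - delta (x, t')"
    | (c) r x t where "g = delta (sc r x, t) - delta (x, f r * t)"
    unfolding tens_gens_def by blast
  then show ?case
  proof cases
    case a
    have "goodX Q' f sc {x, x', x + x'} lam \<longrightarrow> Phi lam g \<in> Q'" for lam
    proof
      assume "goodX Q' f sc {x, x', x + x'} lam"
      hence m: "mc Q' (lam (x + x')) (lam x + lam x')" unfolding goodX_def by blast
      have "Phi lam g = lam (x + x') * t - lam x * t - lam x' * t"
        unfolding a by (simp add: Phi_diff Phi_delta)
      also have "\<dots> = (lam (x + x') - (lam x + lam x')) * t" by (simp add: algebra_simps)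
      finally show "Phi lam g \<in> Q'" using m ideal_multr[OF Qi] unfolding mc_def by simp
    qed
    thus ?thesis by (intro exI[of _ "{x, x', x + x'}"]) simp
  next
    case b
    have "Phi lam g = lam x * (t + t') - lam x * t - lam x * t'" for lam
      unfolding b by (simp add: Phi_diff Phi_delta)
    hence "Phi lam g = 0" for lam by (simp add: algebra_simps)
    thus ?thesis using ideal_0[OF Qi] by (intro exI[of _ "{}"]) simp
  next
    case c
    have "goodX Q' f sc {x, sc r x} lam \<longrightarrow> Phi lam g \<in> Q'" for lam
    proof
      assume "goodX Q' f sc {x, sc r x} lam"
      hence m: "mc Q' (lam (sc r x)) (f r * lam x)" unfolding goodX_def by blast
      have "Phi lam g = lam (sc r x) * t - lam x * (f r * t)"
        unfolding c by (simp add: Phi_diff Phi_delta)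
      also have "\<dots> = (lam (sc r x) - f r * lam x) * t" by (simp add: algebra_simps)
      finally show "Phi lam g \<in> Q'" using m ideal_multr[OF Qi] unfolding mc_def by simp
    qed
    thus ?thesis by (intro exI[of _ "{x, sc r x}"]) simp
  qed
next
  case zero
  show ?case using ideal_0[OF Qi] by (intro exI[of _ "{}"]) (simp add: Phi_zero zero_fun_def)
next
  case (diff a b)
  obtain Xa where Xa: "finite Xa" "\<And>lam. goodX Q' f sc Xa lam \<Longrightarrow> Phi lam a \<in> Q'" using diff.IH(1) by blast
  obtain Xb where Xb: "finite Xb" "\<And>lam. goodX Q' f sc Xb lam \<Longrightarrow> Phi lam b \<in> Q'" using diff.IH(2) by blast
  have "goodX Q' f sc (Xa \<union> Xb) lam \<longrightarrow> Phi lam (a - b) \<in> Q'" for lam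
  proof
    assume "goodX Q' f sc (Xa \<union> Xb) lam"
    hence "Phi lam a \<in> Q'" "Phi lam b \<in> Q'" using Xa Xb goodX_mono by blast+
    moreover have "Phi lam (a - b) = Phi lam a - Phi lam b"
      using tens_sub_ab[OF diff.hyps(1)] tens_sub_ab[OF diff.hyps(2)] by (rule Phi_diff)
    ultimately show "Phi lam (a - b) \<in> Q'" using ideal_diff[OF Qi] by simp
  qed
  hence "\<exists>X. finite X \<and> (\<forall>lam. goodX Q' f sc X lam \<longrightarrow> Phi lam (a - b) \<in> Q')"
    using Xa Xb by (intro exI[of _ "Xa \<union> Xb"]) simp
  thus ?case by (simp add: fun_diff_def)
qed


lemma module_van_all:
  assumes M: "module sc" and P0: "is_prime_ideal P0"
    and van: "\<And>x. \<exists>r. r \<notin> P0 \<and> sc r x = 0"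
  shows "localization P0 UNIV (-) 0 sc = {loc_zero P0 UNIV (-) 0 sc}"
proof (rule loc_all_related)
  show "(0::'b) \<in> UNIV" by simp
  show "1 \<notin> P0" using prime_one[OF P0] .
  fix m m' :: 'b and s s' assume "s \<notin> P0" "s' \<notin> P0"
  show "\<exists>t. t \<notin> P0 \<and> sc t (sc s' m - sc s m') = 0" using van by blast
qed

lemma module_loc_zero:
  assumes M: "module sc" and P0: "is_prime_ideal P0"
    and L: "localization P0 UNIV (-) 0 sc = {loc_zero P0 UNIV (-) 0 sc}"
  shows "\<exists>r. r \<notin> P0 \<and> sc r x = 0"
proof -
  interpret M: module sc by (rule M)
  have "\<exists>t. t\<notin>P0 \<and> sc t (sc 1 0 - sc 1 x) = 0"
  proof (rule loc_zero_rel[OF L])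
    show "x \<in> UNIV" by simp
    show "1 \<notin> P0" using prime_one[OF P0] .
    show "\<exists>t. t \<notin> P0 \<and> sc t (sc 1 x - sc 1 x) = 0" using prime_one[OF P0] by (intro exI[of _ 1]) simp
  qed
  then obtain t where "t \<notin> P0" "sc t (sc 1 0 - sc 1 x) = 0" by blast
  moreover have "sc t (sc 1 0 - sc 1 x) = - sc t x" by simp
  ultimately show ?thesis by auto
qed

theorem proposition4p4:
  fixes sc :: "'r::comm_ring_1 \<Rightarrow> 'e::ab_group_add \<Rightarrow> 'e"
    and f :: "'r \<Rightarrow> 's::comm_ring_1"
    and g :: "'r \<Rightarrow> 'b::comm_ring_1"
    and scB :: "'b \<Rightarrow> 'e \<Rightarrow> 'e"
  assumes "module sc"
    and "afg_witness sc g scB"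
    and "is_ring_hom f"
    and "going_down f"
  shows "{Q. is_prime_ideal Q \<and> spec_map f Q \<in> Supp_type sc} = Supp_tensor f sc"
proof (rule set_eqI, rule iffI)
  have M: "module sc" and fh: "is_ring_hom f" and GD: "going_down f" using assms by blast+
  have gh: "is_ring_hom g" and MB: "module scB" and Fin: "\<exists>F. finite F \<and> module.span scB F = UNIV"
    and scg: "\<And>r x. sc r x = scB (g r) x" using assms(2) unfolding afg_witness_def by blast+
  fix Q :: "'s set"
  assume "Q \<in> {Q. is_prime_ideal Q \<and> spec_map f Q \<in> Supp_type sc}"
  hence Qp: "is_prime_ideal Q" and Sup: "f -` Q \<in> Supp_type sc" by (auto simp: spec_map_def)
  define P0 where "P0 = f -` Q"
  have P0p: "is_prime_ideal P0" unfolding P0_def by (rule prime_preimage[OF fh Qp])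
  have Lne: "localization P0 UNIV (-) 0 sc \<noteq> {loc_zero P0 UNIV (-) 0 sc}"
    using Sup unfolding Supp_type_def Supp_def P0_def by blast
  have "\<not> (\<forall>x. \<exists>r. r \<notin> P0 \<and> sc r x = 0)"
  proof
    assume "\<forall>x. \<exists>r. r \<notin> P0 \<and> sc r x = 0"
    hence "localization P0 UNIV (-) 0 sc = {loc_zero P0 UNIV (-) 0 sc}"
      using module_van_all[OF M P0p] by blast
    thus False using Lne by blast
  qed
  then obtain x where x: "\<And>r. r \<notin> P0 \<Longrightarrow> sc r x \<noteq> 0" by blast
  interpret MB: module scB by (rule MB)
  define I where "I = {b. scB b x = 0}"
  define U where "U = {u. \<exists>r. r \<notin> P0 \<and> u = g r}"
  have Ii: "is_ideal I" unfolding is_ideal_def I_def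
    by (simp add: MB.scale_left_distrib) (metis MB.scale_scale MB.scale_zero_right)
  have IU: "I \<inter> U = {}"
  proof (rule equals0I)
    fix b assume "b \<in> I \<inter> U"
    then obtain r where "r \<notin> P0" "b = g r" "scB b x = 0" unfolding I_def U_def by blast
    thus False using x[of r] scg[of r x] by simp
  qed
  have "1 \<notin> P0 \<and> (1::'b) = g 1" using prime_one[OF P0p] hom_1[OF gh] by simp
  hence U1: "1 \<in> U" unfolding U_def by blast
  have Um: "a * b \<in> U" if ab: "a \<in> U" "b \<in> U" for a b
  proof -
    obtain r r' where "r \<notin> P0" "a = g r" "r' \<notin> P0" "b = g r'" using ab unfolding U_def by blast
    moreover have "r * r' \<notin> P0" using calculation prime_mult[OF P0p] by blast
    moreover have "a * b = g (r * r')" using calculation hom_mult[OF gh] by simp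
    ultimately show ?thesis unfolding U_def by blast
  qed
  obtain q where qp: "is_prime_ideal q" and Iq: "I \<subseteq> q" and qU: "q \<inter> U = {}"
    using exists_prime_avoid[OF Ii IU U1 Um] by blast
  have Pp: "is_prime_ideal (g -` q)" by (rule prime_preimage[OF gh qp])
  have PP0: "g -` q \<subseteq> spec_map f Q"
  proof
    fix r assume "r \<in> g -` q"
    hence "g r \<in> q" by simp
    hence "r \<in> P0" using qU unfolding U_def by blast
    thus "r \<in> spec_map f Q" by (simp add: P0_def spec_map_def)
  qed
  have "\<exists>Q'. is_prime_ideal Q' \<and> Q' \<subseteq> Q \<and> spec_map f Q' = g -` q"
    using GD Qp Pp PP0 unfolding going_down_def by blast
  then obtain Q' where Q'p: "is_prime_ideal Q'" and Q'Q: "Q' \<subseteq> Q" and PP0': "spec_map f Q' = g -` q"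
    by blast
  have PP: "f -` Q' = g -` q" using PP0' by (simp add: spec_map_def)
  have Q'i: "is_ideal Q'" and qi: "is_ideal q" using Q'p qp prime_ideal by blast+
  obtain F where F: "finite F" "module.span scB F = UNIV" using Fin by blast
  have xq: "\<And>b. b \<notin> q \<Longrightarrow> scB b x \<noteq> 0" using Iq unfolding I_def by blast
  obtain \<mu> y0 where mu1: "\<And>a a'. \<mu> (a + a') - \<mu> a - \<mu> a' \<in> q"
    and mu2: "\<And>b a. \<mu> (scB b a) - b * \<mu> a \<in> q" and y0: "\<mu> y0 \<notin> q"
    using mu_exists[OF MB qp F xq] by blast
  show "Q \<in> Supp_tensor f sc"
    unfolding Supp_tensor_def Supp_def
  proof (intro CollectI conjI notI)
    show "is_prime_ideal Q" by (rule Qp)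
    assume L: "localization Q (tensor f sc) tens_diff (tens_zero f sc) (tens_scale f sc) =
      {loc_zero Q (tensor f sc) tens_diff (tens_zero f sc) (tens_scale f sc)}"
    define d where "d = delta (y0, 1::'s)"
    have dab: "d \<in> free_ab" by (simp add: d_def)
    have "\<exists>t. t \<notin> Q \<and> tens_scale f sc t (tens_diff (tens_scale f sc 1 (tens_zero f sc))
            (tens_scale f sc 1 (cls f sc d))) = tens_zero f sc"
    proof (rule loc_zero_rel[OF L])
      show "cls f sc d \<in> tensor f sc" using dab by (simp add: tensor_cls)
      show "1 \<notin> Q" using prime_one[OF Qp] .
      have "tens_scale f sc 1 (tens_diff (tens_scale f sc 1 (cls f sc d)) (tens_scale f sc 1 (cls f sc d)))
          = tens_zero f sc"
        using dab by (simp add: tens_scale_cls tens_diff_cls tens_zero_cls)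
      thus "\<exists>t. t \<notin> Q \<and> tens_scale f sc t (tens_diff (tens_scale f sc 1 (cls f sc d))
            (tens_scale f sc 1 (cls f sc d))) = tens_zero f sc"
        using prime_one[OF Qp] by blast
    qed
    then obtain t where t: "t \<notin> Q" and te: "tens_scale f sc t (tens_diff (tens_scale f sc 1 (tens_zero f sc))
            (tens_scale f sc 1 (cls f sc d))) = tens_zero f sc" by blast
    have "tens_scale f sc t (tens_diff (tens_scale f sc 1 (tens_zero f sc))
            (tens_scale f sc 1 (cls f sc d))) = cls f sc (free_sact t (0 - d))"
      using dab by (simp add: tens_scale_cls tens_diff_cls tens_zero_cls del: diff_0)
    also have "free_sact t (0 - d) = 0 - delta (y0, t)"
      using dab by (simp add: free_sact_diff d_def del: diff_0)
    finally have "cls f sc (0 - delta (y0, t)) = cls f sc 0" using te by (simp add: tens_zero_cls fun_diff_def del: diff_0)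
    hence "(0 - delta (y0, t)) - 0 \<in> tens_sub f sc" by (subst (asm) cls_eq) simp_all
    hence dt: "delta (y0, t) \<in> tens_sub f sc" using tens_sub_uminus by fastforce
    obtain X where X: "finite X" "\<And>lam. goodX Q' f sc X lam \<Longrightarrow> Phi lam (delta (y0, t)) \<in> Q'"
      using Phi_sub[OF Q'i dt] by blast
    obtain xs where xs: "set xs = X" using finite_list[OF X(1)] by blast
    define ys where "ys = map \<mu> xs"
    obtain L where G: "good_ell f g q Q' (\<mu> y0) (Vl g q (\<mu> y0) ys) L"
      using ell_exists[OF gh fh qp Q'p PP y0] by blast
    let ?V = "Vl g q (\<mu> y0) ys"
    have VP: "q \<subseteq> ?V" "\<mu> y0 \<in> ?V" "\<And>a b. a\<in>?V \<Longrightarrow> b\<in>?V \<Longrightarrow> a + b \<in> ?V"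
      "\<And>a r. a\<in>?V \<Longrightarrow> g r * a \<in> ?V" "set ys \<subseteq> ?V" using Vl_props[OF gh qi, of "\<mu> y0" ys] by blast+
    have muV: "\<mu> x \<in> ?V" if "x \<in> X" for x using VP(5) that xs unfolding ys_def by auto
    have Ladd: "\<And>a b. a\<in>?V \<Longrightarrow> b\<in>?V \<Longrightarrow> mc Q' (L (a + b)) (L a + L b)"
      and Lsc: "\<And>a r. a\<in>?V \<Longrightarrow> mc Q' (L (g r * a)) (f r * L a)"
      and Lw: "L (\<mu> y0) \<notin> Q'"
      using G unfolding good_ell_def by blast+
    have "goodX Q' f sc X (\<lambda>x. L (\<mu> x))" unfolding goodX_def
    proof (intro conjI allI impI)
      fix x x' assume h: "x \<in> X" "x' \<in> X" "x + x' \<in> X"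
      have "mc Q' (L (\<mu> (x + x'))) (L (\<mu> x + \<mu> x'))"
      proof (rule good_ell_cong[OF gh qi Q'i G])
        show "\<mu> (x + x') \<in> ?V" using muV h by blast
        show "\<mu> x + \<mu> x' \<in> ?V" using muV h VP(3) by blast
        show "\<mu> (x + x') - (\<mu> x + \<mu> x') \<in> q" using mu1[of x x'] by (simp add: diff_diff_eq)
      qed
      moreover have "mc Q' (L (\<mu> x + \<mu> x')) (L (\<mu> x) + L (\<mu> x'))" using Ladd muV h by blast
      ultimately show "mc Q' (L (\<mu> (x + x'))) (L (\<mu> x) + L (\<mu> x'))" using mc_trans[OF Q'i] by blast
    next
      fix r x assume h: "x \<in> X" "sc r x \<in> X"
      have "mc Q' (L (\<mu> (sc r x))) (L (g r * \<mu> x))"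
      proof (rule good_ell_cong[OF gh qi Q'i G])
        show "\<mu> (sc r x) \<in> ?V" using muV h by blast
        show "g r * \<mu> x \<in> ?V" using muV h VP(4) by blast
        show "\<mu> (sc r x) - g r * \<mu> x \<in> q" using mu2[of "g r" x] scg by simp
      qed
      moreover have "mc Q' (L (g r * \<mu> x)) (f r * L (\<mu> x))" using Lsc muV h by blast
      ultimately show "mc Q' (L (\<mu> (sc r x))) (f r * L (\<mu> x))" using mc_trans[OF Q'i] by blast
    qed
    hence "Phi (\<lambda>x. L (\<mu> x)) (delta (y0, t)) \<in> Q'" by (rule X(2))
    hence "L (\<mu> y0) * t \<in> Q'" by (simp add: Phi_delta)
    moreover have "t \<notin> Q'" using t Q'Q by blast
    ultimately show False using Lw prime_mult[OF Q'p] by blast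
  qed
next
  have M: "module sc" and fh: "is_ring_hom f" using assms by blast+
  fix Q :: "'s set"
  assume "Q \<in> Supp_tensor f sc"
  hence Qp: "is_prime_ideal Q" and Lne: "localization Q (tensor f sc) tens_diff (tens_zero f sc) (tens_scale f sc)
       \<noteq> {loc_zero Q (tensor f sc) tens_diff (tens_zero f sc) (tens_scale f sc)}"
    unfolding Supp_tensor_def Supp_def by blast+
  have P0p: "is_prime_ideal (f -` Q)" by (rule prime_preimage[OF fh Qp])
  have "localization (f -` Q) UNIV (-) 0 sc \<noteq> {loc_zero (f -` Q) UNIV (-) 0 sc}"
  proof
    assume "localization (f -` Q) UNIV (-) 0 sc = {loc_zero (f -` Q) UNIV (-) 0 sc}"
    hence "\<And>x. \<exists>r. r \<notin> f -` Q \<and> sc r x = 0" using module_loc_zero[OF M P0p] by blast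
    thus False using easy_dir[OF fh Qp] Lne by blast
  qed
  hence "f -` Q \<in> Supp_type sc" unfolding Supp_type_def Supp_def using P0p by blast
  thus "Q \<in> {Q. is_prime_ideal Q \<and> spec_map f Q \<in> Supp_type sc}" using Qp by (simp add: spec_map_def)
qed


end
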